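(* Let $F:\mathcal{W}\to\mathbb{R}$ be smooth. Let $\tilde x_t\in\mathcal{W}$, set $x^j_{t,0}=\tilde x_t$ and define $x^j_{t,k}=\mathrm{R}_{x^j_{t,k-1}}\big(-\alpha_{t,k-1}\mathcal{G}_F(x^j_{t,k-1})\big)$ for $k\ge1$, where $\alpha_{t,k-1}>0$ and $\mathcal{G}_F(x^j_{t,k-1})\in\mathrm{T}_{x^j_{t,k-1}}\mathcal{M}$ is an estimator of $\mathrm{grad}F(x^j_{t,k-1})$; assume all these points lie in $\mathcal{W}$. Then for every $k\ge1$, \[ \|\mathrm{R}_{\tilde x_t}^{-1}(x^j_{t,k})\|^2\le 2k\sum_{\tau=0}^{k-1}\alpha_{t,\tau}^2\big(C_2^2+\alpha_{t,\tau}^2C_3^2\|\mathcal{G}_F(x^j_{t,\tau})\|^2\big)\|\mathcal{G}_F(x^j_{t,\tau})\|^2 . \]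
   Context: $\mathcal{M}$ is a Riemannian manifold with norm $\|\cdot\|$ on tangent spaces; $0_x$ is the zero of $\mathrm{T}_x\mathcal{M}$. $\mathrm{R}$ is a smooth retraction ($\mathrm{R}_x(0_x)=x$, $\mathrm{D}\mathrm{R}_x(0_x)=\mathrm{id}$). $\mathcal{W}\subseteq\mathcal{M}$ is a compact connected set that is totally retractive: there is $r>0$ such that for every $y\in\mathcal{W}$, $\mathcal{W}\subseteq\mathrm{R}_y(\mathbb{B}(0_y,r))$ and $\mathrm{R}_y$ is a diffeomorphism on $\mathbb{B}(0_y,r)$; so $\mathrm{R}_x^{-1}(y)$ is defined for $x,y\in\mathcal{W}$. For $x,y\in\mathcal{W}$ let $P_{x,y}=\mathrm{R}_y^{-1}\circ\mathrm{R}_x$ (a map from $\mathrm{R}_x^{-1}(\mathcal{W})\subseteq\mathrm{T}_x\mathcal{M}$ to $\mathrm{T}_y\mathcal{M}$). $C_2,C_3>0$ are constants (depending only on $\mathcal{M}$, $\mathrm{R}$, $\mathcal{W}$, obtained as uniform bounds on the first and second derivatives of $P_{x,y}$ on this compact domain) such that for all $x,y\in\mathcal{W}$ and all $\eta\in\mathrm{T}_x\mathcal{M}$ with $\mathrm{R}_x(\eta)\in\mathcal{W}$: $\|\mathrm{D}P_{x,y}(0_x)\|_{\mathrm{op}}\le C_2$ and $\|P_{x,y}(\eta)-P_{x,y}(0_x)-\mathrm{D}P_{x,y}(0_x)[\eta]\|\le C_3\|\eta\|^2$. *)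

theory Defs
  imports "HOL-Analysis.Analysis"
begin

text \<open>Points of the manifold are elements of a
  type 'p; the tangent space at x is a linear subspace T x of a common real inner
  product space 'v (isometric embedding of the tangent bundle). A retraction is a map
  R :: 'p => 'v => 'p, where R x is applied to tangent vectors in T x.\<close>

definition Rinv :: "('p \<Rightarrow> 'v::real_normed_vector \<Rightarrow> 'p) \<Rightarrow> ('p \<Rightarrow> 'v set) \<Rightarrow> real \<Rightarrow> 'p \<Rightarrow> 'p \<Rightarrow> 'v"
  where "Rinv R T r y z = (THE v. v \<in> T y \<and> norm v < r \<and> R y v = z)"

definition totally_retractive ::
  "('p \<Rightarrow> 'v::real_normed_vector \<Rightarrow> 'p) \<Rightarrow> ('p \<Rightarrow> 'v set) \<Rightarrow> 'p set \<Rightarrow> real \<Rightarrow> bool"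
  where "totally_retractive R T W r \<longleftrightarrow> r > 0 \<and>
     (\<forall>y\<in>W. W \<subseteq> R y ` (T y \<inter> ball 0 r) \<and> inj_on (R y) (T y \<inter> ball 0 r))"

end

theory Submission
  imports Defs
begin

theorem lemma3:
  fixes R :: "'p::topological_space \<Rightarrow> 'v::real_inner \<Rightarrow> 'p"
    and T :: "'p \<Rightarrow> 'v set"
    and W :: "'p set"
    and r C2 C3 :: real
    and DP :: "'p \<Rightarrow> 'p \<Rightarrow> 'v \<Rightarrow> 'v"
    and xt :: 'p
    and x :: "nat \<Rightarrow> 'p"
    and \<alpha> :: "nat \<Rightarrow> real"
    and G :: "nat \<Rightarrow> 'v"
    and k :: nat
  assumes tangent: "\<And>p. subspace (T p)"
    and R_zero: "\<And>p. R p 0 = p"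
    and W_compact: "compact W" and W_connected: "connected W"
    and W_retr: "totally_retractive R T W r"
    and C2_pos: "C2 > 0" and C3_pos: "C3 > 0"
    and DP_deriv: "\<And>p q. p \<in> W \<Longrightarrow> q \<in> W \<Longrightarrow>
           ((\<lambda>\<eta>. Rinv R T r q (R p \<eta>)) has_derivative DP p q) (at 0 within T p)"
    and DP_bound: "\<And>p q v. p \<in> W \<Longrightarrow> q \<in> W \<Longrightarrow> v \<in> T p \<Longrightarrow>
           norm (DP p q v) \<le> C2 * norm v"
    and P_remainder: "\<And>p q \<eta>. p \<in> W \<Longrightarrow> q \<in> W \<Longrightarrow> \<eta> \<in> T p \<Longrightarrow> R p \<eta> \<in> W \<Longrightarrow>
           norm (Rinv R T r q (R p \<eta>) - Rinv R T r q (R p 0) - DP p q \<eta>) \<le> C3 * (norm \<eta>)\<^sup>2"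
    and xt_W: "xt \<in> W"
    and x0: "x 0 = xt"
    and x_step: "\<And>i. x (Suc i) = R (x i) (- (\<alpha> i *\<^sub>R G i))"
    and \<alpha>_pos: "\<And>i. \<alpha> i > 0"
    and G_tangent: "\<And>i. G i \<in> T (x i)"
    and x_W: "\<And>i. x i \<in> W"
    and k_pos: "k \<ge> 1"
  shows "(norm (Rinv R T r xt (x k)))\<^sup>2 \<le>
    2 * real k * (\<Sum>\<tau><k. (\<alpha> \<tau>)\<^sup>2 * (C2\<^sup>2 + (\<alpha> \<tau>)\<^sup>2 * C3\<^sup>2 * (norm (G \<tau>))\<^sup>2) * (norm (G \<tau>))\<^sup>2)"
proof -
  define v where "v i = Rinv R T r xt (x i)" for i
  define c where "c i = C2 * (\<alpha> i * norm (G i)) + C3 * (\<alpha> i * norm (G i))\<^sup>2" for i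
  have r_pos: "r > 0" and inj: "inj_on (R xt) (T xt \<inter> ball 0 r)"
    using W_retr xt_W unfolding totally_retractive_def by auto
  have v0: "v 0 = 0"
  proof -
    have "(THE w. w \<in> T xt \<and> norm w < r \<and> R xt w = xt) = 0"
    proof (rule the_equality)
      show "0 \<in> T xt \<and> norm (0::'v) < r \<and> R xt 0 = xt"
        using r_pos R_zero tangent subspace_0 by auto
    next
      fix w assume w: "w \<in> T xt \<and> norm w < r \<and> R xt w = xt"
      have z: "0 \<in> T xt \<inter> ball 0 r" using r_pos tangent subspace_0 by auto
      have "w \<in> T xt \<inter> ball 0 r" using w by auto
      moreover have "R xt w = R xt 0" using w R_zero by simp
      ultimately show "w = 0" using inj z by (meson inj_onD)
    qed
    then show ?thesis unfolding v_def Rinv_def x0 .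
  qed
  have step: "norm (v (Suc i) - v i) \<le> c i" for i
  proof -
    let ?\<eta> = "- (\<alpha> i *\<^sub>R G i)"
    have eta: "?\<eta> \<in> T (x i)" using tangent G_tangent
      by (simp add: subspace_neg subspace_scale)
    have "R (x i) ?\<eta> \<in> W" using x_W x_step by metis
    then have rem: "norm (v (Suc i) - v i - DP (x i) xt ?\<eta>) \<le> C3 * (norm ?\<eta>)\<^sup>2"
      using P_remainder[OF x_W xt_W eta] unfolding v_def x_step R_zero by simp
    have dp: "norm (DP (x i) xt ?\<eta>) \<le> C2 * norm ?\<eta>" using DP_bound[OF x_W xt_W eta] .
    have n: "norm ?\<eta> = \<alpha> i * norm (G i)" using \<alpha>_pos[of i] by simp
    have "norm (v (Suc i) - v i) \<le> norm (v (Suc i) - v i - DP (x i) xt ?\<eta>) + norm (DP (x i) xt ?\<eta>)"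
      by (metis diff_add_cancel norm_triangle_ineq)
    then show ?thesis using rem dp unfolding c_def n by linarith
  qed
  have bound: "norm (v n) \<le> (\<Sum>\<tau><n. c \<tau>)" for n
  proof (induction n)
    case 0 then show ?case using v0 by simp
  next
    case (Suc n)
    have "norm (v (Suc n)) \<le> norm (v (Suc n) - v n) + norm (v n)"
      by (metis diff_add_cancel norm_triangle_ineq)
    then show ?case using Suc step[of n] by simp
  qed
  have cnn: "c i \<ge> 0" for i using C2_pos C3_pos \<alpha>_pos[of i] unfolding c_def by simp
  have "(norm (v k))\<^sup>2 \<le> (\<Sum>\<tau><k. c \<tau>)\<^sup>2"
    using bound[of k] by (simp add: power_mono)
  also have "\<dots> \<le> (\<Sum>\<tau><k. (c \<tau>)\<^sup>2) * real k"
    using sum_squared_le_sum_of_squares[of c "{..<k}"] by simp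
  also have "\<dots> \<le> (\<Sum>\<tau><k. 2 * ((\<alpha> \<tau>)\<^sup>2 * (C2\<^sup>2 + (\<alpha> \<tau>)\<^sup>2 * C3\<^sup>2 * (norm (G \<tau>))\<^sup>2) * (norm (G \<tau>))\<^sup>2)) * real k"
  proof (rule mult_right_mono[OF sum_mono])
    fix \<tau>
    let ?a = "C2 * (\<alpha> \<tau> * norm (G \<tau>))" and ?b = "C3 * (\<alpha> \<tau> * norm (G \<tau>))\<^sup>2"
    have "(c \<tau>)\<^sup>2 \<le> 2 * (?a\<^sup>2 + ?b\<^sup>2)" unfolding c_def
      using sum_squares_bound[of ?a ?b] by (simp add: power2_eq_square algebra_simps)
    also have "\<dots> = 2 * ((\<alpha> \<tau>)\<^sup>2 * (C2\<^sup>2 + (\<alpha> \<tau>)\<^sup>2 * C3\<^sup>2 * (norm (G \<tau>))\<^sup>2) * (norm (G \<tau>))\<^sup>2)"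
      by (simp add: power2_eq_square algebra_simps)
    finally show "(c \<tau>)\<^sup>2 \<le> \<dots>" .
  qed simp
  also have "\<dots> = 2 * real k * (\<Sum>\<tau><k. (\<alpha> \<tau>)\<^sup>2 * (C2\<^sup>2 + (\<alpha> \<tau>)\<^sup>2 * C3\<^sup>2 * (norm (G \<tau>))\<^sup>2) * (norm (G \<tau>))\<^sup>2)"
    by (simp add: sum_distrib_left algebra_simps)
  finally show ?thesis unfolding v_def .
qed

end
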